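(* The set $\mathtt{SUR}$ of surjective cellular automata is dense in $\mathtt{CA}$ equipped with the pointwise topology. Equivalently: for every $c\in\mathtt{CA}$ and every finite set $X\subseteq\Sigma^\mathbb{Z}$ there is a surjective $d\in\mathtt{CA}$ with $d(x)_0=c(x)_0$ for all $x\in X$.
   Context: $\Sigma$ is a finite alphabet with $|\Sigma|\ge 2$, and $\Sigma^\mathbb{Z}$ carries the product (Cantor) topology. The shift $\sigma$ is $\sigma(x)_i=x_{i+1}$. A cellular automaton (CA) is a continuous map $c:\Sigma^\mathbb{Z}\to\Sigma^\mathbb{Z}$ with $c\circ\sigma=\sigma\circ c$; $\mathtt{CA}$ is the set of all CA, $\mathtt{SUR}\subseteq\mathtt{CA}$ the surjective ones. The pointwise topology on $\mathtt{CA}$ is generated by the subbase $U_x(a)=\{c\in\mathtt{CA}\mid c(x)_0=a\}$, $x\in\Sigma^\mathbb{Z}$, $a\in\Sigma$. *)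

theory Defs
  imports "HOL-Analysis.Analysis"
begin

definition cantor_top :: "(int \<Rightarrow> 'a) topology" where
  "cantor_top = product_topology (\<lambda>_. discrete_topology UNIV) UNIV"

definition shift :: "(int \<Rightarrow> 'a) \<Rightarrow> (int \<Rightarrow> 'a)" where
  "shift x = (\<lambda>i. x (i + 1))"

definition is_CA :: "((int \<Rightarrow> 'a) \<Rightarrow> (int \<Rightarrow> 'a)) \<Rightarrow> bool" where
  "is_CA c \<longleftrightarrow> continuous_map cantor_top cantor_top c \<and> c \<circ> shift = shift \<circ> c"

definition CA :: "((int \<Rightarrow> 'a) \<Rightarrow> (int \<Rightarrow> 'a)) set" where
  "CA = {c. is_CA c}"

definition SUR :: "((int \<Rightarrow> 'a) \<Rightarrow> (int \<Rightarrow> 'a)) set" where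
  "SUR = {c \<in> CA. surj c}"

definition U_sub :: "(int \<Rightarrow> 'a) \<Rightarrow> 'a \<Rightarrow> ((int \<Rightarrow> 'a) \<Rightarrow> (int \<Rightarrow> 'a)) set" where
  "U_sub x a = {c \<in> CA. c x 0 = a}"

definition pointwise_top :: "((int \<Rightarrow> 'a) \<Rightarrow> (int \<Rightarrow> 'a)) topology" where
  "pointwise_top = topology_generated_by {U_sub x a | x a. True}"

end

theory Submission
  imports Defs
begin

lemma cont_local:
  fixes f :: "(int \<Rightarrow> 'a) \<Rightarrow> (int \<Rightarrow> 'b)"
  assumes "\<And>i. \<exists>J. finite J \<and> (\<forall>x y. (\<forall>j\<in>J. x j = y j) \<longrightarrow> f x i = f y i)"
  shows "continuous_map cantor_top cantor_top f"
proof -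
  have "continuous_map (product_topology (\<lambda>_. discrete_topology UNIV) UNIV)
          (discrete_topology UNIV) (\<lambda>x. f x i)" for i
  proof -
    obtain J where J: "finite J" "\<forall>x y. (\<forall>j\<in>J. x j = y j) \<longrightarrow> f x i = f y i"
      using assms by blast
    show ?thesis unfolding continuous_map
    proof (intro conjI allI impI)
      show "(\<lambda>x. f x i) ` topspace (product_topology (\<lambda>_. discrete_topology UNIV) UNIV)
             \<subseteq> topspace (discrete_topology UNIV)" by simp
      fix U :: "'b set"
      show "openin (product_topology (\<lambda>_. discrete_topology UNIV) UNIV)
          {x \<in> topspace (product_topology (\<lambda>_. discrete_topology UNIV) UNIV). f x i \<in> U}"
        unfolding openin_product_topology_alt
      proof
        fix x assume x: "x \<in> {x \<in> topspace (product_topology (\<lambda>_. discrete_topology (UNIV::'a set)) UNIV). f x i \<in> U}"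
        define V where "V = (\<lambda>j. if j \<in> J then {x j} else (UNIV::'a set))"
        show "\<exists>V. finite {j \<in> UNIV. V j \<noteq> topspace (discrete_topology UNIV)} \<and>
             (\<forall>j\<in>UNIV. openin (discrete_topology UNIV) (V j)) \<and> x \<in> Pi\<^sub>E UNIV V \<and>
             Pi\<^sub>E UNIV V \<subseteq> {x \<in> topspace (product_topology (\<lambda>_. discrete_topology UNIV) UNIV). f x i \<in> U}"
        proof (intro exI conjI)
          show "finite {j \<in> UNIV. V j \<noteq> topspace (discrete_topology UNIV)}"
            by (rule finite_subset[OF _ J(1)]) (auto simp: V_def)
          show "\<forall>j\<in>UNIV. openin (discrete_topology UNIV) (V j)" by simp
          show "x \<in> Pi\<^sub>E UNIV V" by (auto simp: V_def)
          show "Pi\<^sub>E UNIV V \<subseteq> {x \<in> topspace (product_topology (\<lambda>_. discrete_topology UNIV) UNIV). f x i \<in> U}"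
          proof
            fix y assume "y \<in> Pi\<^sub>E UNIV V"
            then have "\<forall>j\<in>J. y j = x j" by (auto simp: V_def PiE_iff split: if_splits)
            then have "f y i = f x i" using J(2) by blast
            then show "y \<in> {x \<in> topspace (product_topology (\<lambda>_. discrete_topology UNIV) UNIV). f x i \<in> U}"
              using x by simp
          qed
        qed
      qed
    qed
  qed
  then show ?thesis
    unfolding cantor_top_def continuous_map_componentwise_UNIV by blast
qed

lemma exists_latin:
  "\<exists>op :: 'a::finite \<Rightarrow> 'a \<Rightarrow> 'a. (\<forall>a b. op a b = op b a) \<and> (\<forall>a t. \<exists>b. op a b = t)"
proof -
  define n where "n = int CARD('a)"
  have npos: "n > 0" by (simp add: n_def)
  have cd: "card (UNIV::'a set) = card {0..<n}" by (simp add: n_def)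
  obtain e where e: "bij_betw e (UNIV::'a set) {0..<n}"
    using finite_same_card_bij[OF finite finite_atLeastLessThan_int cd] by blast
  have inj: "inj e" and rng: "range e = {0..<n}" using e by (auto simp: bij_betw_def)
  define op where "op a b = inv_into UNIV e ((e a + e b) mod n)" for a b
  have "\<forall>a b. op a b = op b a" by (simp add: op_def add.commute)
  moreover have "\<forall>a t. \<exists>b. op a b = t"
  proof (intro allI)
    fix a t
    define b where "b = inv_into UNIV e ((e t - e a) mod n)"
    have "(e t - e a) mod n \<in> range e" using rng npos by simp
    then have eb: "e b = (e t - e a) mod n" by (simp add: b_def f_inv_into_f)
    have et: "e t \<in> {0..<n}" using rng by blast
    have "(e a + e b) mod n = e t mod n" by (simp add: eb mod_add_right_eq)
    also have "\<dots> = e t" using et by simp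
    finally show "\<exists>b. op a b = t" by (intro exI[of _ b]) (simp add: op_def inv_into_f_f[OF inj])
  qed
  ultimately show ?thesis by blast
qed

primrec bS :: "('a \<Rightarrow> 'a \<Rightarrow> 'b \<Rightarrow> 'a) \<Rightarrow> ((int \<Rightarrow> 'a) \<Rightarrow> 'b) \<Rightarrow> int \<Rightarrow> (int \<Rightarrow> 'a) \<Rightarrow> nat \<Rightarrow> int \<Rightarrow> 'a" where
  "bS F H r y 0 = (\<lambda>_. undefined)"
| "bS F H r y (Suc k) = (let s = bS F H r y k in
     s(r + int k := (SOME v. F (s (int k - r)) v (H (\<lambda>j. s (int k + j))) = y (int k)),
       -r - 1 - int k := (SOME u. F u (s (r - 1 - int k)) (H (\<lambda>j. s (-1 - int k + j))) = y (-1 - int k))))"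

lemma bS_stable:
  assumes "r \<ge> 1" "-r - int k \<le> j" "j \<le> r - 1 + int k" "k \<le> k'"
  shows "bS F H r y k' j = bS F H r y k j"
  using assms(4)
proof (induction k' rule: dec_induct)
  case base then show ?case by simp
next
  case (step m)
  have "j \<noteq> r + int m" "j \<noteq> -r - 1 - int m" using assms step.hyps by auto
  then show ?case using step.IH by (simp add: Let_def)
qed

lemma bip_surj:
  fixes F :: "'a \<Rightarrow> 'a \<Rightarrow> 'b \<Rightarrow> 'a" and H :: "(int \<Rightarrow> 'a) \<Rightarrow> 'b"
  assumes r: "r \<ge> 1"
    and FU: "\<forall>v k t. \<exists>u. F u v k = t" and FV: "\<forall>u k t. \<exists>v. F u v k = t"
    and H: "\<forall>x y. (\<forall>j. -r < j \<and> j < r \<longrightarrow> x j = y j) \<longrightarrow> H x = H y"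
  shows "surj (\<lambda>x i. F (x (i-r)) (x (i+r)) (H (\<lambda>j. x (i+j))))"
proof (rule surjI)
  fix y :: "int \<Rightarrow> 'a"
  let ?S = "bS F H r y"
  define x where "x j = ?S (nat \<bar>j\<bar> + 1) j" for j
  have xS: "x j = ?S K j" if "-r - int K \<le> j" "j \<le> r - 1 + int K" for j K
  proof -
    have "x j = ?S (max K (nat \<bar>j\<bar> + 1)) j"
      unfolding x_def by (rule bS_stable[symmetric]) (use r in auto)
    also have "\<dots> = ?S K j" by (rule bS_stable) (use r that in auto)
    finally show ?thesis .
  qed
  show "(\<lambda>i. F (x (i-r)) (x (i+r)) (H (\<lambda>j. x (i+j)))) = y"
  proof
    fix i
    show "F (x (i-r)) (x (i+r)) (H (\<lambda>j. x (i+j))) = y i"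
    proof (cases "i \<ge> 0")
      case True
      define k where "k = nat i"
      have ik: "i = int k" using True by (simp add: k_def)
      let ?s = "?S k"
      have ne: "r + int k \<noteq> -r - 1 - int k" using r by simp
      have val: "?S (Suc k) (r + int k) = (SOME v. F (?s (int k - r)) v (H (\<lambda>j. ?s (int k + j))) = y (int k))"
        using ne by (simp add: Let_def)
      have sp: "F (?s (int k - r)) (?S (Suc k) (r + int k)) (H (\<lambda>j. ?s (int k + j))) = y (int k)"
        unfolding val by (rule someI_ex) (use FV in blast)
      have 1: "x (i - r) = ?s (int k - r)" using xS[where j="i - r" and K="k"] r ik by simp
      have 2: "x (i + r) = ?S (Suc k) (r + int k)" using xS[where j="i + r" and K="Suc k"] r ik by (simp add: add.commute)
      have 3: "H (\<lambda>j. x (i+j)) = H (\<lambda>j. ?s (int k + j))"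
        using H xS[where K=k] ik by force
      show ?thesis using sp 1 2 3 ik by simp
    next
      case False
      define k where "k = nat (-i-1)"
      have ik: "i = -1 - int k" using False by (simp add: k_def)
      let ?s = "?S k"
      have val: "?S (Suc k) (-r - 1 - int k) = (SOME u. F u (?s (r - 1 - int k)) (H (\<lambda>j. ?s (-1 - int k + j))) = y (-1 - int k))"
        by (simp add: Let_def)
      have sp: "F (?S (Suc k) (-r - 1 - int k)) (?s (r - 1 - int k)) (H (\<lambda>j. ?s (-1 - int k + j))) = y (-1 - int k)"
        unfolding val by (rule someI_ex) (use FU in blast)
      have ir: "i - r = -r - 1 - int k" using ik by simp
      have 1: "x (i - r) = ?S (Suc k) (-r - 1 - int k)"
        unfolding ir by (rule xS) (use r in auto)
      have ir2: "i + r = r - 1 - int k" using ik by simp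
      have 2: "x (i + r) = ?s (r - 1 - int k)"
        unfolding ir2 by (rule xS) (use r in auto)
      have 3: "H (\<lambda>j. x (i+j)) = H (\<lambda>j. ?s (-1 - int k + j))"
        using H xS[where K=k] ik by force
      show ?thesis using sp 1 2 3 ik by simp
    qed
  qed
qed

lemma main_exist:
  fixes c :: "(int \<Rightarrow> 'a::finite) \<Rightarrow> (int \<Rightarrow> 'a)"
  assumes finX: "finite X"
  shows "\<exists>d\<in>SUR. \<forall>x\<in>X. d x 0 = c x 0"
proof -
  define P where "P = {(x,y). x \<in> X \<and> y \<in> X \<and> x \<noteq> y}"
  have finP: "finite P" by (rule finite_subset[of _ "X \<times> X"]) (use finX in \<open>auto simp: P_def\<close>)
  define J where "J p = (SOME j. fst p j \<noteq> snd p j)" for p :: "(int \<Rightarrow> 'a) \<times> (int \<Rightarrow> 'a)"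
  define m where "m = Max (insert 0 ((\<lambda>p. nat \<bar>J p\<bar>) ` P))"
  have m: "\<exists>j. \<bar>j\<bar> \<le> int m \<and> x j \<noteq> y j" if "x \<in> X" "y \<in> X" "x \<noteq> y" for x y
  proof -
    have inP: "(x,y) \<in> P" using that by (simp add: P_def)
    have "\<exists>j. x j \<noteq> y j" using that(3) by (auto simp: fun_eq_iff)
    then have "x (J (x,y)) \<noteq> y (J (x,y))" using someI_ex[of "\<lambda>j. x j \<noteq> y j"] unfolding J_def by simp
    moreover have "nat \<bar>J (x,y)\<bar> \<le> m" unfolding m_def
      by (rule Max_ge) (use finP inP in auto)
    ultimately show ?thesis by (intro exI[of _ "J (x,y)"]) auto
  qed
  obtain op :: "'a \<Rightarrow> 'a \<Rightarrow> 'a" where opc: "\<forall>a b. op a b = op b a" and ops: "\<forall>a t. \<exists>b. op a b = t"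
    using exists_latin by blast
  define F where "F u v k = op (op u v) k" for u v k
  have FK: "\<forall>u v t. \<exists>k. F u v k = t" using ops by (simp add: F_def)
  have FV: "\<forall>u k t. \<exists>v. F u v k = t"
  proof (intro allI)
    fix u k t
    obtain w where w: "op k w = t" using ops by blast
    obtain v where v: "op u v = w" using ops by blast
    show "\<exists>v. F u v k = t" using w v opc by (intro exI[of _ v]) (simp add: F_def)
  qed
  have FU: "\<forall>v k t. \<exists>u. F u v k = t" using FV opc by (simp add: F_def)
  define r where "r = int m + 1"
  define R where "R w = (\<lambda>j::int. if \<bar>j\<bar> \<le> int m then w j else undefined)" for w :: "int \<Rightarrow> 'a"
  define h where "h w = (let x = (SOME x. x \<in> X \<and> R x = w) in SOME t. F (x (-r)) (x r) t = c x 0)" for w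
  define H where "H w = h (R w)" for w
  define d where "d x = (\<lambda>i. F (x (i-r)) (x (i+r)) (H (\<lambda>j. x (i+j))))" for x :: "int \<Rightarrow> 'a"
  have Hloc: "\<forall>x y. (\<forall>j. -r < j \<and> j < r \<longrightarrow> x j = y j) \<longrightarrow> H x = H y"
  proof (intro allI impI)
    fix x y :: "int \<Rightarrow> 'a" assume a: "\<forall>j. -r < j \<and> j < r \<longrightarrow> x j = y j"
    have "R x = R y"
    proof
      fix j
      show "R x j = R y j"
      proof (cases "\<bar>j\<bar> \<le> int m")
        case True
        then have "-r < j \<and> j < r" by (auto simp: r_def)
        then show ?thesis using a True by (simp add: R_def)
      next
        case False
        then show ?thesis by (simp add: R_def)
      qed
    qed
    then show "H x = H y" by (simp add: H_def)
  qed
  have surjd: "surj d"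
    unfolding d_def[abs_def] by (rule bip_surj) (use FU FV Hloc in \<open>auto simp: r_def\<close>)
  have contd: "continuous_map cantor_top cantor_top d"
  proof (rule cont_local)
    fix i
    show "\<exists>J. finite J \<and> (\<forall>x y. (\<forall>j\<in>J. x j = y j) \<longrightarrow> d x i = d y i)"
    proof (intro exI conjI allI impI)
      show "finite {i-r..i+r}" by simp
      fix x y :: "int \<Rightarrow> 'a" assume a: "\<forall>j\<in>{i-r..i+r}. x j = y j"
      have "H (\<lambda>j. x (i+j)) = H (\<lambda>j. y (i+j))"
        using Hloc a by (auto simp: r_def)
      moreover have "x (i-r) = y (i-r)" "x (i+r) = y (i+r)" using a by (auto simp: r_def)
      ultimately show "d x i = d y i" by (simp add: d_def)
    qed
  qed
  have shd: "d \<circ> shift = shift \<circ> d"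
    by (rule ext, rule ext) (simp add: d_def shift_def algebra_simps)
  have "d \<in> SUR" using surjd contd shd by (simp add: SUR_def CA_def is_CA_def)
  moreover have "\<forall>x\<in>X. d x 0 = c x 0"
  proof
    fix x assume xX: "x \<in> X"
    define x' where "x' = (SOME x'. x' \<in> X \<and> R x' = R x)"
    have ex: "x' \<in> X \<and> R x' = R x"
      using someI[of "\<lambda>x'. x' \<in> X \<and> R x' = R x" x] xX unfolding x'_def by simp
    have x'x: "x' = x"
    proof (rule ccontr)
      assume ne: "x' \<noteq> x"
      obtain j where j: "\<bar>j\<bar> \<le> int m" "x' j \<noteq> x j" using m[OF _ xX ne] ex by blast
      have "R x' j = R x j" using ex by simp
      then show False using j by (simp add: R_def)
    qed
    have hv: "h (R x) = (SOME t. F (x (-r)) (x r) t = c x 0)"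
      unfolding h_def Let_def x'_def[symmetric] x'x ..
    have "F (x (-r)) (x r) (h (R x)) = c x 0"
      unfolding hv by (rule someI_ex) (use FK in blast)
    then show "d x 0 = c x 0" by (simp add: d_def H_def)
  qed
  ultimately show ?thesis by blast
qed

lemma open_local:
  assumes "generate_topology_on {U_sub x a |x a. True} U" "c \<in> U"
  shows "\<exists>X. finite X \<and> {d \<in> CA. \<forall>x\<in>X. d x 0 = c x 0} \<subseteq> U"
  using assms
proof (induction arbitrary: c rule: generate_topology_on.induct)
  case Empty then show ?case by simp
next
  case (Int a b)
  have ca: "c \<in> a" and cb: "c \<in> b" using Int.prems by auto
  obtain X1 where "finite X1" "{d \<in> CA. \<forall>x\<in>X1. d x 0 = c x 0} \<subseteq> a" using Int.IH(1)[OF ca] by blast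
  moreover obtain X2 where "finite X2" "{d \<in> CA. \<forall>x\<in>X2. d x 0 = c x 0} \<subseteq> b" using Int.IH(2)[OF cb] by blast
  ultimately show ?case by (intro exI[of _ "X1 \<union> X2"]) auto
next
  case (UN K)
  then obtain k where "k \<in> K" "c \<in> k" by auto
  with UN.IH obtain X where "finite X" "{d \<in> CA. \<forall>x\<in>X. d x 0 = c x 0} \<subseteq> k" by blast
  with \<open>k \<in> K\<close> show ?case by blast
next
  case (Basis s)
  then obtain x a where s: "s = U_sub x a" by auto
  show ?case using Basis s by (intro exI[of _ "{x}"]) (auto simp: U_sub_def)
qed

theorem proposition3p3:
  assumes "CARD('a::finite) \<ge> 2"
  shows "pointwise_top closure_of (SUR :: ((int \<Rightarrow> 'a) \<Rightarrow> (int \<Rightarrow> 'a)) set)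
           = topspace (pointwise_top :: ((int \<Rightarrow> 'a) \<Rightarrow> (int \<Rightarrow> 'a)) topology)
       \<and> (\<forall>c \<in> (CA :: ((int \<Rightarrow> 'a) \<Rightarrow> (int \<Rightarrow> 'a)) set). \<forall>X. finite X \<longrightarrow>
            (\<exists>d \<in> SUR. \<forall>x \<in> X. d x 0 = c x 0))"
proof
  show "\<forall>c \<in> (CA :: ((int \<Rightarrow> 'a) \<Rightarrow> (int \<Rightarrow> 'a)) set). \<forall>X. finite X \<longrightarrow>
            (\<exists>d \<in> SUR. \<forall>x \<in> X. d x 0 = c x 0)"
    using main_exist by blast
  show "pointwise_top closure_of (SUR :: ((int \<Rightarrow> 'a) \<Rightarrow> (int \<Rightarrow> 'a)) set)
           = topspace (pointwise_top :: ((int \<Rightarrow> 'a) \<Rightarrow> (int \<Rightarrow> 'a)) topology)"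
  proof (rule antisym[OF closure_of_subset_topspace], rule subsetI)
    fix c :: "(int \<Rightarrow> 'a) \<Rightarrow> (int \<Rightarrow> 'a)"
    assume c: "c \<in> topspace pointwise_top"
    show "c \<in> pointwise_top closure_of SUR"
      unfolding closure_of_def
    proof (intro CollectI conjI allI impI c)
      fix T assume T: "c \<in> T \<and> openin pointwise_top T"
      then have "generate_topology_on {U_sub x a |x a. True} T"
        unfolding pointwise_top_def using openin_topology_generated_by by blast
      then obtain X where X: "finite X" "{d \<in> CA. \<forall>x\<in>X. d x 0 = c x 0} \<subseteq> T"
        using open_local T by blast
      obtain d where "d \<in> SUR" "\<forall>x\<in>X. d x 0 = c x 0" using main_exist[OF X(1)] by blast
      moreover then have "d \<in> CA" by (simp add: SUR_def)
      ultimately show "\<exists>y\<in>SUR. y \<in> T" using X(2) by blast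
    qed
  qed
qed

end
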